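(* Let $n\equiv 3\pmod 4$ with $n>3$. Let $1\le r<m$, let $M_r\in\mathfrak{C}_r$, and suppose $\det\tilde M_r>0$. Then $$\max\{\det E: E\in\mathfrak{E}_m\}>(n-3)\max\{\det E: E\in\mathfrak{E}_{m-1}\}.$$
   Context: Fix an integer $n\equiv 3\pmod 4$, $n>3$. For $m\ge1$, $\mathfrak{C}_m$ is the set of symmetric positive definite $m\times m$ integer matrices $C=(c_{ij})$ with $c_{ii}=n$ and $c_{ij}\equiv n\pmod 4$ for all $i,j$ (a finite set, since positive definiteness forces $|c_{ij}|<n$ for $i\neq j$). Given a fixed $M_r\in\mathfrak{C}_r$, for $m\ge r$, $\mathfrak{E}_m$ is the set of $E_m\in\mathfrak{C}_m$ whose leading $r\times r$ submatrix is $M_r$. For a square matrix $C$ of order $m$, $\tilde C$ denotes the matrix obtained from $C$ by replacing its $(m,m)$ entry by $3$. *)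

theory Defs
  imports "Jordan_Normal_Form.Determinant"
begin

definition pos_def_int :: "int mat \<Rightarrow> bool" where
  "pos_def_int C \<longleftrightarrow>
     (\<forall>x :: nat \<Rightarrow> real. (\<exists>i<dim_row C. x i \<noteq> 0) \<longrightarrow>
        (\<Sum>i<dim_row C. \<Sum>j<dim_row C. x i * real_of_int (C $$ (i,j)) * x j) > 0)"

definition CC :: "int \<Rightarrow> nat \<Rightarrow> int mat set" where
  "CC n m = {C. C \<in> carrier_mat m m \<and> transpose_mat C = C \<and> pos_def_int C
              \<and> (\<forall>i<m. C $$ (i,i) = n)
              \<and> (\<forall>i<m. \<forall>j<m. C $$ (i,j) mod 4 = n mod 4)}"

definition EE :: "int \<Rightarrow> int mat \<Rightarrow> nat \<Rightarrow> int mat set" where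
  "EE n M m = {E. E \<in> CC n m \<and> (\<forall>i<dim_row M. \<forall>j<dim_row M. E $$ (i,j) = M $$ (i,j))}"

definition tilde :: "int mat \<Rightarrow> int mat" where
  "tilde C = mat (dim_row C) (dim_col C)
     (\<lambda>(i,j). if i = dim_row C - 1 \<and> j = dim_col C - 1 then 3 else C $$ (i,j))"

end

theory Submission
  imports Defs
begin



definition Qf :: "int mat \<Rightarrow> (nat \<Rightarrow> real) \<Rightarrow> real" where
  "Qf A x = (\<Sum>i<dim_row A. \<Sum>j<dim_row A. x i * real_of_int (A $$ (i,j)) * x j)"

definition Bf :: "int mat \<Rightarrow> (nat \<Rightarrow> real) \<Rightarrow> (nat \<Rightarrow> real) \<Rightarrow> real" where
  "Bf A x y = (\<Sum>i<dim_row A. \<Sum>j<dim_row A. x i * real_of_int (A $$ (i,j)) * y j)"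

lemma pos_def_Qf: "pos_def_int C \<longleftrightarrow> (\<forall>x. (\<exists>i<dim_row C. x i \<noteq> 0) \<longrightarrow> Qf C x > 0)"
  unfolding pos_def_int_def Qf_def by simp

lemma Qf_nonneg: assumes "pos_def_int C" shows "Qf C x \<ge> 0"
proof (cases "\<exists>i<dim_row C. x i \<noteq> 0")
  case True thus ?thesis using assms unfolding pos_def_Qf by (auto intro: less_imp_le)
next
  case False thus ?thesis unfolding Qf_def by auto
qed

lemma Qf_expand:
  "Qf A (\<lambda>i. u i + t * z i) = Qf A u + t * Bf A u z + t * Bf A z u + t^2 * Qf A z"
proof -
  have "\<And>i j. (u i + t * z i) * real_of_int (A $$ (i,j)) * (u j + t * z j)
     = u i * real_of_int (A $$ (i,j)) * u j + t * (u i * real_of_int (A $$ (i,j)) * z j)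
       + t * (z i * real_of_int (A $$ (i,j)) * u j) + t^2 * (z i * real_of_int (A $$ (i,j)) * z j)"
    by (simp add: algebra_simps power2_eq_square)
  then show ?thesis unfolding Qf_def Bf_def
    by (simp add: sum.distrib sum_distrib_left)
qed

lemma Bf_sym: assumes "transpose_mat A = A" "A \<in> carrier_mat p p"
  shows "Bf A z u = Bf A u z"
proof -
  have s: "\<And>i j. i < p \<Longrightarrow> j < p \<Longrightarrow> A $$ (j,i) = A $$ (i,j)"
    using assms by (metis carrier_matD(1) carrier_matD(2) index_transpose_mat(1))
  have d: "dim_row A = p" using assms(2) by simp
  have "Bf A z u = (\<Sum>i<p. \<Sum>j<p. z i * real_of_int (A $$ (i,j)) * u j)"
    unfolding Bf_def d ..
  also have "\<dots> = (\<Sum>j<p. \<Sum>i<p. z i * real_of_int (A $$ (i,j)) * u j)"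
    by (rule sum.swap)
  also have "\<dots> = (\<Sum>j<p. \<Sum>i<p. u j * real_of_int (A $$ (j,i)) * z i)"
    by (intro sum.cong refl) (simp add: s)
  also have "\<dots> = Bf A u z" unfolding Bf_def d ..
  finally show ?thesis .
qed

lemma adj_col:
  assumes A: "A \<in> carrier_mat p p" and k: "k < p"
  defines "z \<equiv> (\<lambda>i. real_of_int (adj_mat A $$ (i,k)))"
  shows "\<And>i. i < p \<Longrightarrow> (\<Sum>j<p. real_of_int (A $$ (i,j)) * z j) = (if i = k then real_of_int (det A) else 0)"
    and "Bf A u z = real_of_int (det A) * u k"
    and "Qf A z = real_of_int (det A) * z k"
    and "z k = real_of_int (det (mat_delete A k k))"
proof -
  have aA: "adj_mat A \<in> carrier_mat p p" using adj_mat(1)[OF A] .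
  have eq: "A * adj_mat A = det A \<cdot>\<^sub>m 1\<^sub>m p" using adj_mat(2)[OF A] .
  show row: "\<And>i. i < p \<Longrightarrow> (\<Sum>j<p. real_of_int (A $$ (i,j)) * z j) = (if i = k then real_of_int (det A) else 0)"
  proof -
    fix i assume i: "i < p"
    have "(A * adj_mat A) $$ (i,k) = (\<Sum>j<p. A $$ (i,j) * adj_mat A $$ (j,k))"
      using A aA i k by (simp add: scalar_prod_def times_mat_def atLeast0LessThan)
    moreover have "(A * adj_mat A) $$ (i,k) = (if i = k then det A else 0)"
      unfolding eq using i k by simp
    ultimately have "(\<Sum>j<p. A $$ (i,j) * adj_mat A $$ (j,k)) = (if i = k then det A else 0)" by simp
    then have "real_of_int (\<Sum>j<p. A $$ (i,j) * adj_mat A $$ (j,k)) = (if i = k then real_of_int (det A) else 0)"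
      by simp
    then show "(\<Sum>j<p. real_of_int (A $$ (i,j)) * z j) = (if i = k then real_of_int (det A) else 0)"
      unfolding z_def by simp
  qed
  have B: "\<And>u. Bf A u z = real_of_int (det A) * u k"
  proof -
    fix u
    have "Bf A u z = (\<Sum>i<p. u i * (\<Sum>j<p. real_of_int (A $$ (i,j)) * z j))"
      unfolding Bf_def using A by (simp add: sum_distrib_left mult.assoc)
    also have "\<dots> = (\<Sum>i<p. u i * (if i = k then real_of_int (det A) else 0))"
      using row by simp
    also have "\<dots> = real_of_int (det A) * u k" using k
      by (simp add: if_distrib cong: if_cong)
    finally show "Bf A u z = real_of_int (det A) * u k" .
  qed
  then show "Bf A u z = real_of_int (det A) * u k" .
  show "Qf A z = real_of_int (det A) * z k" using B[of z] unfolding Qf_def Bf_def .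
  show "z k = real_of_int (det (mat_delete A k k))"
    unfolding z_def adj_mat_def cofactor_def using A k by simp
qed



lemma Qf_delete:
  assumes C: "C \<in> carrier_mat (Suc q) (Suc q)"
  shows "Qf (mat_delete C q q) x = Qf C (\<lambda>l. if l < q then x l else 0)"
proof -
  have "Qf C (\<lambda>l. if l < q then x l else 0) =
     (\<Sum>i<q. \<Sum>j<q. x i * real_of_int (C $$ (i,j)) * x j)"
    unfolding Qf_def using C by simp
  also have "\<dots> = Qf (mat_delete C q q) x"
    unfolding Qf_def using C by (auto intro!: sum.cong simp: mat_delete_def)
  finally show ?thesis by simp
qed

lemma pd_delete:
  assumes C: "C \<in> carrier_mat (Suc q) (Suc q)" and pd: "pos_def_int C"
  shows "pos_def_int (mat_delete C q q)"
  unfolding pos_def_Qf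
proof (intro allI impI)
  fix x :: "nat \<Rightarrow> real" assume "\<exists>i<dim_row (mat_delete C q q). x i \<noteq> 0"
  then obtain i where i: "i < q" "x i \<noteq> 0" using C by auto
  have "Qf C (\<lambda>l. if l < q then x l else 0) > 0"
    using pd i C unfolding pos_def_Qf by (metis (mono_tags, lifting) carrier_matD(1) less_SucI)
  then show "Qf (mat_delete C q q) x > 0" using Qf_delete[OF C] by simp
qed

lemma pd_det:
  assumes "C \<in> carrier_mat p p" "pos_def_int C"
  shows "det C > 0"
  using assms
proof (induction p arbitrary: C)
  case 0 then show ?case by simp
next
  case (Suc q)
  note C = Suc.prems(1)
  have D': "det (mat_delete C q q) > 0"
    using Suc.IH[OF _ pd_delete[OF C Suc.prems(2)]] mat_delete_carrier[OF C] by simp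
  define z where "z = (\<lambda>i. real_of_int (adj_mat C $$ (i,q)))"
  have zq: "z q = real_of_int (det (mat_delete C q q))" and Qz: "Qf C z = real_of_int (det C) * z q"
    using adj_col[OF C, of q] unfolding z_def by auto
  have "Qf C z > 0" using Suc.prems(2) zq D' C unfolding pos_def_Qf
    by (metis carrier_matD(1) lessI of_int_0_less_iff order_less_irrefl)
  then have "real_of_int (det C) * real_of_int (det (mat_delete C q q)) > 0" using Qz zq by simp
  then show ?case using D' by (simp add: zero_less_mult_iff)
qed

lemma schur:
  assumes C: "C \<in> carrier_mat (Suc q) (Suc q)" and sym: "transpose_mat C = C"
    and pd: "pos_def_int C"
  shows "real_of_int (det (mat_delete C q q)) * Qf C u \<ge> real_of_int (det C) * (u q)^2"
proof -
  define z where "z = (\<lambda>i. real_of_int (adj_mat C $$ (i,q)))"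
  define D where "D = real_of_int (det C)"
  define D' where "D' = real_of_int (det (mat_delete C q q))"
  have D'pos: "D' > 0" unfolding D'_def
    using pd_det[OF mat_delete_carrier[OF C] pd_delete[OF C pd]] by simp
  have zq: "z q = D'" and Qz: "Qf C z = D * z q" and Bz: "Bf C u z = D * u q"
    using adj_col[OF C, of q] unfolding z_def D_def D'_def by auto
  have Bz': "Bf C z u = D * u q" using Bf_sym[OF sym C] Bz by simp
  define t where "t = - u q / D'"
  have "0 \<le> Qf C (\<lambda>i. u i + t * z i)" using Qf_nonneg[OF pd] .
  also have "\<dots> = Qf C u + 2 * t * (D * u q) + t^2 * (D * D')"
    unfolding Qf_expand Bz Bz' Qz zq by simp
  also have "\<dots> = Qf C u - D * (u q)^2 / D'"
    unfolding t_def using D'pos by (simp add: field_simps power2_eq_square)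
  finally have "D * (u q)^2 / D' \<le> Qf C u" by simp
  then show ?thesis using D'pos unfolding D_def[symmetric] D'_def[symmetric]
    by (simp add: pos_divide_le_eq mult.commute)
qed



definition ext :: "int \<Rightarrow> int mat \<Rightarrow> int mat" where
  "ext n E = mat (Suc (dim_row E)) (Suc (dim_row E)) (\<lambda>(i,j).
     if i < dim_row E \<and> j < dim_row E then E $$ (i,j)
     else if i = dim_row E \<and> j = dim_row E then n
     else if i = dim_row E then (if j = dim_row E - 1 then 3 else E $$ (dim_row E - 1, j))
     else (if i = dim_row E - 1 then 3 else E $$ (i, dim_row E - 1)))"

lemma Qf_ext:
  assumes E: "E \<in> carrier_mat (Suc q) (Suc q)" and diag: "E $$ (q,q) = n"
  shows "Qf (ext n E) x = Qf E (\<lambda>i. x i + x (Suc q) * (if i = q then 1 else 0))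
             + 2 * (3 - real_of_int n) * x q * x (Suc q)"
proof -
  define p where "p = Suc q"
  define F where "F = ext n E"
  define s where "s = x p"
  define d :: "nat \<Rightarrow> real" where "d = (\<lambda>i. if i = q then 1 else 0)"
  have dE: "dim_row E = p" using E p_def by simp
  have dF: "dim_row F = Suc p" unfolding F_def ext_def dE by simp
  have Fin: "\<And>i j. i < p \<Longrightarrow> j < p \<Longrightarrow> F $$ (i,j) = E $$ (i,j)"
    unfolding F_def ext_def dE by simp
  have Fip: "\<And>i. i < p \<Longrightarrow> real_of_int (F $$ (i,p)) = real_of_int (E $$ (i,q)) + (if i = q then 3 - real_of_int n else 0)"
    unfolding F_def ext_def dE using diag p_def by auto
  have Fpj: "\<And>j. j < p \<Longrightarrow> real_of_int (F $$ (p,j)) = real_of_int (E $$ (q,j)) + (if j = q then 3 - real_of_int n else 0)"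
    unfolding F_def ext_def dE using diag p_def by auto
  have Fpp: "F $$ (p,p) = n" unfolding F_def ext_def dE by simp
  have q: "q < p" unfolding p_def by simp
  have Bxd: "Bf E x d = (\<Sum>i<p. x i * real_of_int (E $$ (i,q)))"
    unfolding Bf_def dE d_def using q by (intro sum.cong refl) (simp add: if_distrib cong: if_cong)
  have Bdx: "Bf E d x = (\<Sum>j<p. real_of_int (E $$ (q,j)) * x j)"
  proof -
    have "Bf E d x = (\<Sum>i<p. if i = q then (\<Sum>j<p. real_of_int (E $$ (q,j)) * x j) else 0)"
      unfolding Bf_def dE d_def by (intro sum.cong refl) auto
    then show ?thesis using q by simp
  qed
  have "Qf F x = (\<Sum>i<p. (\<Sum>j<p. x i * real_of_int (E $$ (i,j)) * x j) + x i * real_of_int (F $$ (i,p)) * s)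
        + ((\<Sum>j<p. s * real_of_int (F $$ (p,j)) * x j) + s * real_of_int n * s)"
    unfolding Qf_def dF s_def by (simp add: Fin Fpp)
  also have "(\<Sum>i<p. (\<Sum>j<p. x i * real_of_int (E $$ (i,j)) * x j) + x i * real_of_int (F $$ (i,p)) * s)
     = Qf E x + s * Bf E x d + (3 - real_of_int n) * x q * s"
  proof -
    have "(\<Sum>i<p. x i * real_of_int (F $$ (i,p)) * s) = (\<Sum>i<p. s * (x i * real_of_int (E $$ (i,q)))
            + (if i = q then (3 - real_of_int n) * x q * s else 0))"
      by (intro sum.cong refl) (auto simp: Fip algebra_simps)
    also have "\<dots> = s * Bf E x d + (3 - real_of_int n) * x q * s"
      unfolding Bxd using q by (simp add: sum.distrib sum_distrib_left)
    finally show ?thesis unfolding Qf_def dE by (simp add: sum.distrib)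
  qed
  also have "((\<Sum>j<p. s * real_of_int (F $$ (p,j)) * x j) + s * real_of_int n * s)
     = s * Bf E d x + (3 - real_of_int n) * x q * s + s^2 * Qf E d"
  proof -
    have "(\<Sum>j<p. s * real_of_int (F $$ (p,j)) * x j) = (\<Sum>j<p. s * (real_of_int (E $$ (q,j)) * x j)
            + (if j = q then (3 - real_of_int n) * x q * s else 0))"
      by (intro sum.cong refl) (auto simp: Fpj algebra_simps)
    also have "\<dots> = s * Bf E d x + (3 - real_of_int n) * x q * s"
      unfolding Bdx using q by (simp add: sum.distrib sum_distrib_left)
    moreover have "Qf E d = real_of_int n"
    proof -
      have i: "\<And>i. (\<Sum>j<p. real_of_int (E $$ (i, j)) * (if j = q then 1 else 0)) = (\<Sum>j<p. if j = q then real_of_int (E $$ (i,q)) else 0)"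
        by (intro sum.cong refl) auto
      have "Qf E d = (\<Sum>i<p. if i = q then real_of_int (E $$ (q,q)) else 0)"
        unfolding Qf_def dE d_def by (intro sum.cong refl) (auto simp: i q)
      then show ?thesis using q diag by simp
    qed
    ultimately show ?thesis by (simp add: power2_eq_square)
  qed
  finally have "Qf F x = Qf E x + s * Bf E x d + s * Bf E d x + s^2 * Qf E d + 2 * (3 - real_of_int n) * x q * s"
    by simp
  also have "\<dots> = Qf E (\<lambda>i. x i + s * d i) + 2 * (3 - real_of_int n) * x q * s"
    unfolding Qf_expand by simp
  finally show ?thesis unfolding F_def s_def d_def p_def .
qed



lemma ext_basic:
  assumes E: "E \<in> carrier_mat (Suc q) (Suc q)"
  shows "ext n E \<in> carrier_mat (Suc (Suc q)) (Suc (Suc q))"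
    and "\<And>i j. i < Suc q \<Longrightarrow> j < Suc q \<Longrightarrow> ext n E $$ (i,j) = E $$ (i,j)"
    and "mat_delete (ext n E) (Suc q) (Suc q) = E"
proof -
  have d: "dim_row E = Suc q" "dim_col E = Suc q" using E by auto
  show "ext n E \<in> carrier_mat (Suc (Suc q)) (Suc (Suc q))" unfolding ext_def d by simp
  show "\<And>i j. i < Suc q \<Longrightarrow> j < Suc q \<Longrightarrow> ext n E $$ (i,j) = E $$ (i,j)"
    unfolding ext_def d by simp
  show "mat_delete (ext n E) (Suc q) (Suc q) = E"
    by (rule eq_matI) (auto simp: mat_delete_def ext_def d)
qed

lemma ext_CC:
  assumes EC: "E \<in> CC n (Suc q)" and n4: "n mod 4 = 3" and n3: "n > 3"
    and Ddet: "det E > (n - 3) * det (mat_delete E q q)"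
  shows "ext n E \<in> CC n (Suc (Suc q))"
    and "det (ext n E) > (n - 3) * det E"
proof -
  define p where "p = Suc q"
  define F where "F = ext n E"
  have E: "E \<in> carrier_mat p p" and sym: "transpose_mat E = E" and pd: "pos_def_int E"
    and diag: "\<And>i. i < p \<Longrightarrow> E $$ (i,i) = n"
    and md: "\<And>i j. i < p \<Longrightarrow> j < p \<Longrightarrow> E $$ (i,j) mod 4 = n mod 4"
    using EC unfolding CC_def p_def by auto
  have d: "dim_row E = p" "dim_col E = p" using E by auto
  have s: "\<And>i j. i < p \<Longrightarrow> j < p \<Longrightarrow> E $$ (j,i) = E $$ (i,j)"
    using sym E by (metis carrier_matD(1) carrier_matD(2) index_transpose_mat(1))
  have Fc: "F \<in> carrier_mat (Suc p) (Suc p)" using ext_basic(1)[OF E[unfolded p_def]] unfolding F_def p_def .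
  have Fdel: "mat_delete F p p = E" using ext_basic(3)[OF E[unfolded p_def]] unfolding F_def p_def .
  have q: "q < p" "p - 1 = q" unfolding p_def by auto
  define c where "c = real_of_int n - 3"
  have cpos: "c > 0" unfolding c_def using n3 by simp
  define D where "D = real_of_int (det E)"
  define D' where "D' = real_of_int (det (mat_delete E q q))"
  have D'pos: "D' > 0" unfolding D'_def
    using pd_det[OF mat_delete_carrier[OF E] pd_delete[OF E[unfolded p_def] pd]] by (simp add: p_def)
  have DD: "D > c * D'" unfolding D_def D'_def c_def using Ddet
    by (metis of_int_less_iff of_int_mult of_int_diff of_int_numeral)
  have Dpos: "D > 0" using DD cpos D'pos by (smt (verit) mult_pos_pos)
  have sch: "\<And>u. D' * Qf E u \<ge> D * (u q)^2"
    using schur[OF E[unfolded p_def] sym pd] unfolding D_def D'_def p_def by simp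
  have Qc: "\<And>u. Qf E u \<ge> c * (u q)^2"
  proof -
    fix u
    have "D' * Qf E u \<ge> D' * (c * (u q)^2)"
      using sch[of u] DD by (smt (verit) mult.assoc mult_right_mono zero_le_power2 mult.commute)
    then show "Qf E u \<ge> c * (u q)^2" using D'pos by simp
  qed
  have QF: "\<And>x. Qf F x = Qf E (\<lambda>i. x i + x p * (if i = q then 1 else 0)) - 2 * c * x q * x p"
    using Qf_ext[OF E[unfolded p_def] diag[OF q(1)]] unfolding F_def p_def c_def by (simp add: algebra_simps)
  have pdF: "pos_def_int F" unfolding pos_def_Qf
  proof (intro allI impI)
    fix x :: "nat \<Rightarrow> real" assume "\<exists>i<dim_row F. x i \<noteq> 0"
    then obtain i where i: "i < Suc p" "x i \<noteq> 0" using Fc by auto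
    define u where "u = (\<lambda>i. x i + x p * (if i = q then 1 else 0))"
    have uq: "u q = x q + x p" unfolding u_def by simp
    have "Qf F x = Qf E u - 2 * c * x q * x p" using QF unfolding u_def .
    show "Qf F x > 0"
    proof (cases "x q = 0 \<and> x p = 0")
      case True
      then have "i < p" using i by (metis less_SucE)
      moreover have "u i = x i" unfolding u_def using True by simp
      ultimately have "Qf E u > 0" using pd i d unfolding pos_def_Qf by metis
      then show ?thesis using \<open>Qf F x = Qf E u - 2 * c * x q * x p\<close> True by simp
    next
      case False
      have "Qf F x \<ge> c * (x q + x p)^2 - 2 * c * x q * x p"
        using Qc[of u] uq \<open>Qf F x = Qf E u - 2 * c * x q * x p\<close> by simp
      also have "c * (x q + x p)^2 - 2 * c * x q * x p = c * ((x q)^2 + (x p)^2)"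
        by (simp add: algebra_simps power2_eq_square)
      finally have "Qf F x \<ge> c * ((x q)^2 + (x p)^2)" .
      moreover have "(x q)^2 + (x p)^2 > 0" using False
        by (simp add: sum_power2_gt_zero_iff)
      ultimately show ?thesis using cpos by (smt (verit) mult_pos_pos)
    qed
  qed
  have symF: "transpose_mat F = F"
    by (rule eq_matI) (use Fc s q in \<open>auto simp: F_def ext_def d\<close>)
  have diagF: "\<forall>i<Suc p. F $$ (i,i) = n" using diag q unfolding F_def ext_def d by auto
  have mdF: "\<forall>i<Suc p. \<forall>j<Suc p. F $$ (i,j) mod 4 = n mod 4"
    using md q n4 unfolding F_def ext_def d by auto
  show "ext n E \<in> CC n (Suc (Suc q))"
    using Fc symF pdF diagF mdF unfolding CC_def F_def p_def by auto
  define z where "z = (\<lambda>i. real_of_int (adj_mat F $$ (i,p)))"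
  have zp: "z p = D" and Qz: "Qf F z = real_of_int (det F) * z p"
    using adj_col[OF Fc, of p] Fdel unfolding z_def D_def by auto
  define u where "u = (\<lambda>i. z i + z p * (if i = q then 1 else 0))"
  define a where "a = u q"
  have aeq: "z q = a - D" unfolding a_def u_def zp by simp
  have "real_of_int (det F) * D = Qf E u - 2 * c * (a - D) * D"
    using QF[of z] Qz zp aeq unfolding u_def by simp
  then have "real_of_int (det F) * D * D' = (Qf E u - 2 * c * (a - D) * D) * D'"
    by simp
  then have eq: "real_of_int (det F) * D * D' = D' * Qf E u - 2 * c * (a - D) * D * D'"
    by (simp add: algebra_simps)
  have "D' * Qf E u \<ge> D * a^2" using sch[of u] unfolding a_def .
  then have "real_of_int (det F) * D * D' \<ge> D * a^2 - 2 * c * (a - D) * D * D'" using eq by simp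
  moreover have "D * a^2 - 2 * c * (a - D) * D * D' = D * (a - c * D')^2 + D * D' * (2 * c * D - c^2 * D')"
    by (simp add: algebra_simps power2_eq_square)
  moreover have "D * (a - c * D')^2 \<ge> 0" using Dpos by simp
  ultimately have "real_of_int (det F) * (D * D') \<ge> (2 * c * D - c^2 * D') * (D * D')"
    by (simp add: algebra_simps)
  then have "real_of_int (det F) \<ge> 2 * c * D - c^2 * D'"
    using Dpos D'pos by (meson mult_pos_pos mult_right_le_imp_le)
  moreover have "2 * c * D - c^2 * D' > c * D"
  proof -
    have "c * (D - c * D') > 0" using cpos DD by simp
    then show ?thesis by (simp add: algebra_simps power2_eq_square)
  qed
  ultimately have "real_of_int (det F) > c * D" by linarith
  then show "det (ext n E) > (n - 3) * det E" unfolding F_def c_def D_def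
    by (metis of_int_less_iff of_int_mult of_int_diff of_int_numeral)
qed



definition dl :: "nat \<Rightarrow> nat \<Rightarrow> real" where "dl a = (\<lambda>i. if i = a then 1 else 0)"

lemma Bf_dl:
  assumes "a < dim_row A" "b < dim_row A"
  shows "Bf A (dl a) (dl b) = real_of_int (A $$ (a,b))"
proof -
  have i: "\<And>i. (\<Sum>j<dim_row A. dl a i * real_of_int (A $$ (i, j)) * dl b j) = (\<Sum>j<dim_row A. if j = b then dl a i * real_of_int (A $$ (i, b)) else 0)"
    by (intro sum.cong refl) (auto simp: dl_def)
  have "Bf A (dl a) (dl b) = (\<Sum>i<dim_row A. if i = a then real_of_int (A $$ (a, b)) else 0)"
    unfolding Bf_def i using assms by (intro sum.cong refl) (auto simp: dl_def)
  then show ?thesis using assms by simp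
qed

lemma CC_bound:
  assumes C: "C \<in> CC n m" and i: "i < m" and j: "j < m" and n: "n > 0"
  shows "C $$ (i,j) \<in> {-n..n}"
proof (cases "i = j")
  case True then show ?thesis using C i n unfolding CC_def by auto
next
  case False
  have Cc: "C \<in> carrier_mat m m" and sym: "transpose_mat C = C" and pd: "pos_def_int C"
    and diag: "\<And>i. i < m \<Longrightarrow> C $$ (i,i) = n" using C unfolding CC_def by auto
  have d: "dim_row C = m" using Cc by simp
  have s: "C $$ (j,i) = C $$ (i,j)"
    using sym Cc i j by (metis carrier_matD(1) carrier_matD(2) index_transpose_mat(1))
  have Q: "\<And>t. Qf C (\<lambda>l. dl i l + t * dl j l) = real_of_int n + 2 * t * real_of_int (C $$ (i,j)) + t^2 * real_of_int n"
  proof -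
    fix t :: real
    have "Qf C (\<lambda>l. dl i l + t * dl j l) = Qf C (dl i) + t * Bf C (dl i) (dl j) + t * Bf C (dl j) (dl i) + t^2 * Qf C (dl j)"
      by (rule Qf_expand)
    also have "\<dots> = real_of_int n + 2 * t * real_of_int (C $$ (i,j)) + t^2 * real_of_int n"
    proof -
      have e: "\<And>x. Qf C x = Bf C x x" unfolding Qf_def Bf_def ..
      have 1: "Bf C (dl i) (dl j) = real_of_int (C $$ (i,j))" using Bf_dl[of i C j] d i j by simp
      have 2: "Bf C (dl j) (dl i) = real_of_int (C $$ (i,j))" using Bf_dl[of j C i] d i j s by simp
      have 3: "Bf C (dl i) (dl i) = real_of_int n" using Bf_dl[of i C i] d i diag by simp
      have 4: "Bf C (dl j) (dl j) = real_of_int n" using Bf_dl[of j C j] d j diag by simp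
      show ?thesis unfolding e 1 2 3 4 by (simp add: algebra_simps)
    qed
    finally show "Qf C (\<lambda>l. dl i l + t * dl j l) = real_of_int n + 2 * t * real_of_int (C $$ (i,j)) + t^2 * real_of_int n" .
  qed
  have pd': "\<And>y. \<exists>l<dim_row C. y l \<noteq> 0 \<Longrightarrow> Qf C y > 0"
    using pd unfolding pos_def_Qf by blast
  have pos2: "\<And>t. 0 < real_of_int n + 2 * t * real_of_int (C $$ (i,j)) + t^2 * real_of_int n"
  proof -
    fix t :: real
    have ex: "\<exists>l<dim_row C. dl i l + t * dl j l \<noteq> 0"
    proof (rule exI[of _ i], rule conjI)
      show "i < dim_row C" using d i by simp
      show "dl i i + t * dl j i \<noteq> 0" using False by (simp add: dl_def)
    qed
    have "Qf C (\<lambda>l. dl i l + t * dl j l) > 0" by (rule pd'[OF ex])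
    then show "0 < real_of_int n + 2 * t * real_of_int (C $$ (i,j)) + t^2 * real_of_int n"
      unfolding Q .
  qed
  have "0 < real_of_int n + 2 * 1 * real_of_int (C $$ (i,j)) + 1^2 * real_of_int n" by (rule pos2)
  then have "real_of_int (- n) < real_of_int (C $$ (i,j))" by simp
  then have u: "- n < C $$ (i,j)" by (simp only: of_int_less_iff)
  have "0 < real_of_int n + 2 * (-1) * real_of_int (C $$ (i,j)) + (-1)^2 * real_of_int n" by (rule pos2)
  then have "real_of_int (C $$ (i,j)) < real_of_int n" by simp
  then have l: "C $$ (i,j) < n" by (simp only: of_int_less_iff)
  from u l show ?thesis by simp
qed

lemma CC_finite:
  assumes n: "n > 0" shows "finite (CC n m)"
proof -
  have "CC n m \<subseteq> (\<lambda>f. mat m m f) ` (PiE ({..<m}\<times>{..<m}) (\<lambda>_. {-n..n}))"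
  proof
    fix C assume C: "C \<in> CC n m"
    then have Cc: "C \<in> carrier_mat m m" unfolding CC_def by auto
    define f where "f = restrict (\<lambda>p. C $$ p) ({..<m}\<times>{..<m})"
    have "f \<in> PiE ({..<m}\<times>{..<m}) (\<lambda>_. {-n..n})"
      unfolding f_def using CC_bound[OF C _ _ n] by auto
    moreover have "C = mat m m f"
      by (rule eq_matI) (use Cc in \<open>auto simp: f_def\<close>)
    ultimately show "C \<in> (\<lambda>f. mat m m f) ` (PiE ({..<m}\<times>{..<m}) (\<lambda>_. {-n..n}))" by blast
  qed
  moreover have "finite (PiE ({..<m}\<times>{..<m}) (\<lambda>_. {-n..n}))"
    by (intro finite_PiE) auto
  ultimately show ?thesis by (meson finite_imageI finite_subset)
qed

lemma EE_finite: "n > 0 \<Longrightarrow> finite (EE n M m)"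
  using CC_finite[of n m] unfolding EE_def by (auto intro: finite_subset)

lemma CC_delete:
  assumes G: "G \<in> CC n (Suc q)"
  shows "mat_delete G q q \<in> CC n q"
    and "\<And>i j. i < q \<Longrightarrow> j < q \<Longrightarrow> mat_delete G q q $$ (i,j) = G $$ (i,j)"
proof -
  have Gc: "G \<in> carrier_mat (Suc q) (Suc q)" and sym: "transpose_mat G = G" and pd: "pos_def_int G"
    and diag: "\<And>i. i < Suc q \<Longrightarrow> G $$ (i,i) = n"
    and md: "\<And>i j. i < Suc q \<Longrightarrow> j < Suc q \<Longrightarrow> G $$ (i,j) mod 4 = n mod 4"
    using G unfolding CC_def by auto
  have s: "\<And>i j. i < Suc q \<Longrightarrow> j < Suc q \<Longrightarrow> G $$ (j,i) = G $$ (i,j)"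
    using sym Gc by (metis carrier_matD(1) carrier_matD(2) index_transpose_mat(1))
  show ent: "\<And>i j. i < q \<Longrightarrow> j < q \<Longrightarrow> mat_delete G q q $$ (i,j) = G $$ (i,j)"
    using Gc by (simp add: mat_delete_def)
  have c: "mat_delete G q q \<in> carrier_mat q q" using mat_delete_carrier[OF Gc] by simp
  have "transpose_mat (mat_delete G q q) = mat_delete G q q"
  proof (rule eq_matI)
    fix i j assume "i < dim_row (mat_delete G q q)" "j < dim_col (mat_delete G q q)"
    then have ij: "i < q" "j < q" using c by auto
    show "transpose_mat (mat_delete G q q) $$ (i, j) = mat_delete G q q $$ (i, j)"
    proof -
      have "transpose_mat (mat_delete G q q) $$ (i, j) = mat_delete G q q $$ (j,i)"
        using ij c by (metis carrier_matD index_transpose_mat(1))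
      then show ?thesis using ent[OF ij] ent[OF ij(2,1)] s[of i j] ij by simp
    qed
  qed (use c Gc in auto)
  then show "mat_delete G q q \<in> CC n q"
    unfolding CC_def using c pd_delete[OF Gc pd] ent diag md by auto
qed

lemma EE_delete:
  assumes G: "G \<in> EE n M (Suc q)" and r: "dim_row M \<le> q"
  shows "mat_delete G q q \<in> EE n M q"
  using CC_delete[of G n q] G r unfolding EE_def by auto

lemma EE_ext:
  assumes E: "E \<in> EE n M (Suc q)" and r: "dim_row M \<le> Suc q"
    and n4: "n mod 4 = 3" and n3: "n > 3"
    and Ddet: "det E > (n - 3) * det (mat_delete E q q)"
  shows "ext n E \<in> EE n M (Suc (Suc q))" and "det (ext n E) > (n - 3) * det E"
proof -
  have EC: "E \<in> CC n (Suc q)" using E unfolding EE_def by auto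
  then have Ec: "E \<in> carrier_mat (Suc q) (Suc q)" unfolding CC_def by auto
  show "ext n E \<in> EE n M (Suc (Suc q))"
    using ext_CC(1)[OF EC n4 n3 Ddet] ext_basic(2)[OF Ec] E r unfolding EE_def by auto
  show "det (ext n E) > (n - 3) * det E" using ext_CC(2)[OF EC n4 n3 Ddet] .
qed

lemma base_det:
  assumes M: "M \<in> carrier_mat (Suc q) (Suc q)" and diag: "M $$ (q,q) = n"
  shows "det (tilde M) = det M - (n - 3) * det (mat_delete M q q)"
proof -
  have d: "dim_row M = Suc q" "dim_col M = Suc q" using M by auto
  have Tc: "tilde M \<in> carrier_mat (Suc q) (Suc q)" unfolding tilde_def d by simp
  have del: "\<And>j. j < Suc q \<Longrightarrow> mat_delete (tilde M) q j = mat_delete M q j"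
    by (rule eq_matI) (auto simp: mat_delete_def tilde_def d)
  have T: "\<And>j. j < Suc q \<Longrightarrow> tilde M $$ (q,j) = M $$ (q,j) - (if j = q then n - 3 else 0)"
    using diag unfolding tilde_def d by auto
  have "det (tilde M) = (\<Sum>j<Suc q. tilde M $$ (q,j) * cofactor (tilde M) q j)"
    using laplace_expansion_row[OF Tc, of q] by simp
  also have "\<dots> = (\<Sum>j<Suc q. M $$ (q,j) * cofactor M q j - (if j = q then (n - 3) * cofactor M q q else 0))"
    by (intro sum.cong refl) (auto simp: T del cofactor_def algebra_simps)
  also have "\<dots> = det M - (n - 3) * cofactor M q q"
    using laplace_expansion_row[OF M, of q] by (simp add: sum_subtractf)
  also have "cofactor M q q = det (mat_delete M q q)" unfolding cofactor_def
    by (simp add: mult_2[symmetric] power_mult)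
  finally show ?thesis .
qed



definition Inv :: "int \<Rightarrow> int mat \<Rightarrow> nat \<Rightarrow> bool" where
  "Inv n M m \<longleftrightarrow> EE n M m \<noteq> {} \<and>
     (\<forall>E\<in>EE n M m. (n - 3) * det (mat_delete E (m - 1) (m - 1)) < Max (det ` EE n M m))"

lemma inv_base:
  assumes n3: "n > 3" and r: "1 \<le> r" and MC: "M \<in> CC n r" and t: "det (tilde M) > 0"
  shows "Inv n M r"
proof -
  have Mc: "M \<in> carrier_mat r r" and diag: "\<And>i. i < r \<Longrightarrow> M $$ (i,i) = n"
    using MC unfolding CC_def by auto
  have dM: "dim_row M = r" using Mc by simp
  have "EE n M r = {M}"
  proof
    show "EE n M r \<subseteq> {M}"
    proof
      fix E assume E: "E \<in> EE n M r"
      then have Ec: "E \<in> carrier_mat r r" unfolding EE_def CC_def by auto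
      have "E = M" by (rule eq_matI) (use E Ec Mc dM in \<open>auto simp: EE_def\<close>)
      then show "E \<in> {M}" by simp
    qed
    show "{M} \<subseteq> EE n M r" using MC unfolding EE_def by auto
  qed
  moreover obtain q where q: "r = Suc q" using r by (cases r) auto
  moreover have "det (tilde M) = det M - (n - 3) * det (mat_delete M q q)"
    using base_det[of M q n] Mc diag q by simp
  ultimately show ?thesis unfolding Inv_def using t by simp
qed

lemma inv_step:
  assumes n4: "n mod 4 = 3" and n3: "n > 3" and I: "Inv n M (Suc q)" and r: "dim_row M \<le> Suc q"
  shows "(n - 3) * Max (det ` EE n M (Suc q)) < Max (det ` EE n M (Suc (Suc q)))"
    and "Inv n M (Suc (Suc q))"
proof -
  have fin1: "finite (EE n M (Suc q))" and fin2: "finite (EE n M (Suc (Suc q)))"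
    using EE_finite n3 by auto
  have ne: "EE n M (Suc q) \<noteq> {}" using I unfolding Inv_def by auto
  have "Max (det ` EE n M (Suc q)) \<in> det ` EE n M (Suc q)"
    using fin1 ne by (intro Max_in) auto
  then obtain E where E: "E \<in> EE n M (Suc q)" and dE: "det E = Max (det ` EE n M (Suc q))" by auto
  have "(n - 3) * det (mat_delete E q q) < det E" using I E dE unfolding Inv_def by auto
  note X = EE_ext[OF E _ n4 n3 this]
  have F: "ext n E \<in> EE n M (Suc (Suc q))" using X(1) r by simp
  have "det (ext n E) \<le> Max (det ` EE n M (Suc (Suc q)))" using fin2 F by (intro Max_ge) auto
  then show lt: "(n - 3) * Max (det ` EE n M (Suc q)) < Max (det ` EE n M (Suc (Suc q)))"
    using X(2) r dE by simp
  show "Inv n M (Suc (Suc q))" unfolding Inv_def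
  proof (intro conjI ballI)
    show "EE n M (Suc (Suc q)) \<noteq> {}" using F by auto
    fix G assume G: "G \<in> EE n M (Suc (Suc q))"
    have "mat_delete G (Suc q) (Suc q) \<in> EE n M (Suc q)" using EE_delete[OF G r] .
    then have "det (mat_delete G (Suc q) (Suc q)) \<le> Max (det ` EE n M (Suc q))"
      using fin1 by (intro Max_ge) auto
    then have "(n - 3) * det (mat_delete G (Suc q) (Suc q)) \<le> (n - 3) * Max (det ` EE n M (Suc q))"
      using n3 by (intro mult_left_mono) auto
    then show "(n - 3) * det (mat_delete G (Suc (Suc q) - 1) (Suc (Suc q) - 1)) < Max (det ` EE n M (Suc (Suc q)))"
      using lt by simp
  qed
qed

theorem theorem7:
  fixes n :: int and r m :: nat and M :: "int mat"
  assumes "n mod 4 = 3" and "n > 3"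
    and "1 \<le> r" and "r < m"
    and "M \<in> CC n r"
    and "det (tilde M) > 0"
  shows "Max (det ` EE n M m) > (n - 3) * Max (det ` EE n M (m - 1))"
proof -
  have dM: "dim_row M = r" using assms(5) unfolding CC_def by auto
  have all: "Inv n M (r + k)" for k
  proof (induction k)
    case 0 then show ?case using inv_base[OF assms(2,3,5,6)] by simp
  next
    case (Suc k)
    obtain q where q: "r + k = Suc q" using assms(3) by (cases "r + k") auto
    have "Inv n M (Suc (Suc q))"
      using inv_step(2)[OF assms(1,2) Suc.IH[unfolded q]] dM q by simp
    then show ?case using q by simp
  qed
  obtain q where q: "m - 1 = Suc q" using assms(3,4) by (cases "m - 1") auto
  have "Inv n M (Suc q)" using all[of "m - 1 - r"] assms(4) q by simp
  from inv_step(1)[OF assms(1,2) this] dM q assms(4)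
  have "(n - 3) * Max (det ` EE n M (Suc q)) < Max (det ` EE n M (Suc (Suc q)))" by simp
  moreover have "m = Suc (Suc q)" using q by simp
  ultimately show ?thesis using q by simp
qed

end
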